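(* Let $\mathrm L$ be a spline-admissible operator on $\mathcal S'(\mathbb T^d)$ with pseudoinverse $\mathrm L^\dagger$, and let $\tau\in\mathbb R$. The following are equivalent: (a) $\mathcal H_2^{-\tau}(\mathbb T^d)\subseteq\mathcal C_{\mathrm L}(\mathbb T^d)$ (continuous embedding); (b) $\mathrm L^\dagger Ш\in\mathcal H_2^{\tau}(\mathbb T^d)$; (c) $\sum_{\bm k\in\mathbb Z^d}(1+\|\bm k\|^2)^{\tau}|\widehat{L^\dagger}[\bm k]|^2<\infty$. In particular ($\tau=0$), $L_2(\mathbb T^d)\subseteq\mathcal C_{\mathrm L}(\mathbb T^d)$ if and only if $\mathrm L^\dagger Ш\in L_2(\mathbb T^d)$ if and only if $(\widehat{L^\dagger}[\bm k])_{\bm k}\in\ell_2(\mathbb Z^d)$.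
   Context: $\mathbb T^d=\mathbb R^d/2\pi\mathbb Z^d$; $\mathcal S(\mathbb T^d)$ the smooth periodic functions and $\mathcal S'(\mathbb T^d)$ its dual, with Fourier expansion $f=\sum\widehat f[\bm k]e_{\bm k}$, $e_{\bm k}(\bm x)=e^{\mathrm i\langle\bm x,\bm k\rangle}$. Linear shift-invariant continuous operators on $\mathcal S'$ act by $\mathrm Lf=\sum\widehat L[\bm k]\widehat f[\bm k]e_{\bm k}$ with slowly growing $\widehat L$; $\mathrm L^*$ has sequence $\overline{\widehat L}$. $\mathrm L$ is spline-admissible if its null space $\mathcal N_{\mathrm L}$ is finite-dimensional and it has a pseudoinverse $\mathrm L^\dagger$ of the same type ($\mathrm L\mathrm L^\dagger\mathrm L=\mathrm L$, $\mathrm L^\dagger\mathrm L\mathrm L^\dagger=\mathrm L^\dagger$, $\mathrm L\mathrm L^\dagger$, $\mathrm L^\dagger\mathrm L$ self-adjoint), with Fourier sequence $\widehat{L^\dagger}[\bm k]=1/\widehat L[\bm k]$ where $\widehat L[\bm k]\neq0$ and $0$ otherwise; $\mathrm{Proj}_{\mathcal N_{\mathrm L}}f=\sum_{\bm k:\widehat L[\bm k]=0}\widehat f[\bm k]e_{\bm k}$. $Ш$ is the Dirac comb ($\widehat Ш[\bm k]=1$). Periodic Sobolev space: $\mathcal H_2^\tau(\mathbb T^d)=\{f\in\mathcal S':\sum(1+\|\bm k\|^2)^\tau|\widehat f[\bm k]|^2<\infty\}$ with that Hilbert norm; $\mathcal H_2^0=L_2(\mathbb T^d)$. Measurement space $\mathcal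 C_{\mathrm L}(\mathbb T^d)=\{g\in\mathcal S':(\mathrm L^\dagger)^*g\in\mathcal C(\mathbb T^d)\}$ with norm $(\|(\mathrm L^\dagger)^*g\|_\infty^2+\|\mathrm{Proj}_{\mathcal N_{\mathrm L}}g\|_2^2)^{1/2}$ (where $\|\cdot\|_2$ is the normalized $L_2$ norm). *)

theory Defs
  imports "HOL-Analysis.Analysis"
begin

text \<open>Periodic distributions on the torus T^d = R^d / 2 pi Z^d are represented by their
Fourier sequences indexed by Z^d = int^'n (the dimension d = CARD('n)).
A sequence is the Fourier sequence of an element of S'(T^d) iff it is slowly growing.\<close>

definition knorm :: "int^'n \<Rightarrow> real" where
  "knorm k = sqrt (\<Sum>i\<in>UNIV. (real_of_int (k $ i))^2)"

definition slowly_growing :: "(int^'n \<Rightarrow> complex) \<Rightarrow> bool" where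
  "slowly_growing c \<longleftrightarrow> (\<exists>C::real. \<exists>N::nat. \<forall>k. cmod (c k) \<le> C * (1 + knorm k) ^ N)"

definition fexp :: "int^'n \<Rightarrow> real^'n \<Rightarrow> complex" where
  "fexp k x = cis (\<Sum>i\<in>UNIV. x $ i * real_of_int (k $ i))"

definition torus_cell :: "(real^'n) set" where
  "torus_cell = cbox 0 (\<chi> i. 2 * pi)"

definition fourier_coeff :: "(real^'n \<Rightarrow> complex) \<Rightarrow> int^'n \<Rightarrow> complex" where
  "fourier_coeff h k = complex_of_real (1 / (2 * pi) ^ CARD('n)) *
      integral torus_cell (\<lambda>x. h x * cnj (fexp k x))"

definition periodic_cont :: "(real^'n \<Rightarrow> complex) \<Rightarrow> bool" where
  "periodic_cont h \<longleftrightarrow> continuous_on UNIV h \<and>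
     (\<forall>x i. h (x + (2 * pi) *\<^sub>R axis i 1) = h x)"

definition represents :: "(real^'n \<Rightarrow> complex) \<Rightarrow> (int^'n \<Rightarrow> complex) \<Rightarrow> bool" where
  "represents h c \<longleftrightarrow> periodic_cont h \<and> (\<forall>k. fourier_coeff h k = c k)"

definition is_continuous_dist :: "(int^'n \<Rightarrow> complex) \<Rightarrow> bool" where
  "is_continuous_dist c \<longleftrightarrow> (\<exists>h. represents h c)"

text \<open>Linear shift-invariant operator with Fourier sequence Lh applied to f.\<close>
definition lsi :: "(int^'n \<Rightarrow> complex) \<Rightarrow> (int^'n \<Rightarrow> complex) \<Rightarrow> (int^'n \<Rightarrow> complex)" where
  "lsi Lh f = (\<lambda>k. Lh k * f k)"

text \<open>Adjoint operator: Fourier sequence is the conjugate.\<close>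
definition adj :: "(int^'n \<Rightarrow> complex) \<Rightarrow> (int^'n \<Rightarrow> complex)" where
  "adj Lh = (\<lambda>k. cnj (Lh k))"

text \<open>Fourier sequence of the pseudoinverse.\<close>
definition pinv :: "(int^'n \<Rightarrow> complex) \<Rightarrow> (int^'n \<Rightarrow> complex)" where
  "pinv Lh = (\<lambda>k. if Lh k \<noteq> 0 then 1 / Lh k else 0)"

definition dirac_comb :: "int^'n \<Rightarrow> complex" where
  "dirac_comb = (\<lambda>k. 1)"

text \<open>Spline-admissible: L is LSI continuous (slowly growing symbol), its null space
{f. Lf = 0} = span {e_k : Lh k = 0} is finite-dimensional, and the pseudoinverse
(whose sequence is necessarily pinv Lh) is again LSI continuous, i.e. slowly growing.\<close>
definition spline_admissible :: "(int^'n \<Rightarrow> complex) \<Rightarrow> bool" where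
  "spline_admissible Lh \<longleftrightarrow> slowly_growing Lh \<and> finite {k. Lh k = 0} \<and>
      slowly_growing (pinv Lh)"

definition sobolev :: "real \<Rightarrow> (int^'n \<Rightarrow> complex) \<Rightarrow> bool" where
  "sobolev \<tau> f \<longleftrightarrow> slowly_growing f \<and>
     (\<lambda>k. (1 + (knorm k)^2) powr \<tau> * (cmod (f k))^2) summable_on UNIV"

definition sobolev_norm :: "real \<Rightarrow> (int^'n \<Rightarrow> complex) \<Rightarrow> real" where
  "sobolev_norm \<tau> f = sqrt (\<Sum>\<^sub>\<infinity>k. (1 + (knorm k)^2) powr \<tau> * (cmod (f k))^2)"

definition proj_null_fun :: "(int^'n \<Rightarrow> complex) \<Rightarrow> (int^'n \<Rightarrow> complex) \<Rightarrow> real^'n \<Rightarrow> complex" where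
  "proj_null_fun Lh g = (\<lambda>x. \<Sum>k\<in>{k. Lh k = 0}. g k * fexp k x)"

definition L2_norm_torus :: "(real^'n \<Rightarrow> complex) \<Rightarrow> real" where
  "L2_norm_torus h = sqrt ((1 / (2 * pi) ^ CARD('n)) * integral torus_cell (\<lambda>x. (cmod (h x))^2))"

definition in_CL :: "(int^'n \<Rightarrow> complex) \<Rightarrow> (int^'n \<Rightarrow> complex) \<Rightarrow> bool" where
  "in_CL Lh g \<longleftrightarrow> slowly_growing g \<and> is_continuous_dist (lsi (adj (pinv Lh)) g)"

definition CL_norm :: "(int^'n \<Rightarrow> complex) \<Rightarrow> (int^'n \<Rightarrow> complex) \<Rightarrow> real" where
  "CL_norm Lh g = sqrt ((SUP x\<in>UNIV. cmod ((SOME h. represents h (lsi (adj (pinv Lh)) g)) x))^2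
                        + (L2_norm_torus (proj_null_fun Lh g))^2)"

text \<open>Continuous embedding H_2^{-tau} into C_L (for linear maps: inclusion plus boundedness).\<close>
definition sobolev_embeds_CL :: "real \<Rightarrow> (int^'n \<Rightarrow> complex) \<Rightarrow> bool" where
  "sobolev_embeds_CL \<tau> Lh \<longleftrightarrow>
     (\<forall>g. sobolev (-\<tau>) g \<longrightarrow> in_CL Lh g) \<and>
     (\<exists>C. \<forall>g. sobolev (-\<tau>) g \<longrightarrow> CL_norm Lh g \<le> C * sobolev_norm (-\<tau>) g)"

end

theory Submission
  imports Defs
begin



lemma fexp_add: "fexp (j + k) x = fexp j x * fexp k x"
  by (simp add: fexp_def cis_mult distrib_left sum.distrib)

lemma fexp_neg: "fexp (-k) x = cnj (fexp k x)"
  by (simp add: fexp_def cis_cnj sum_negf)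

lemma fexp_diff: "fexp (j - k) x = fexp j x * cnj (fexp k x)"
  using fexp_add[of j "-k" x] by (simp add: fexp_neg)

lemma fexp_zero [simp]: "fexp 0 x = 1"
  by (simp add: fexp_def)

lemma fexp_at0 [simp]: "fexp k 0 = 1"
  by (simp add: fexp_def)

lemma norm_fexp [simp]: "cmod (fexp k x) = 1"
  by (simp add: fexp_def)

lemma fexp_shift: "fexp k (x + v) = fexp k x * fexp k v"
  by (simp add: fexp_def cis_mult distrib_right sum.distrib)

lemma fexp_axis: "fexp k (s *\<^sub>R axis i 1) = cis (s * of_int (k $ i))"
proof -
  have "\<And>j. (s *\<^sub>R axis i (1::real)) $ j * real_of_int (k $ j) = (if j = i then s * of_int (k $ i) else 0)"
    by (simp add: axis_def)
  hence "(\<Sum>j\<in>UNIV. (s *\<^sub>R axis i (1::real)) $ j * real_of_int (k $ j)) = s * of_int (k $ i)"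
    by simp
  thus ?thesis by (simp add: fexp_def)
qed

lemma fexp_periodic: "fexp k (x + (2 * pi) *\<^sub>R axis i 1) = fexp k x"
proof -
  have "cis (2 * pi * real_of_int (k $ i)) = 1" by (rule cis_multiple_2pi) simp
  thus ?thesis by (simp add: fexp_shift fexp_axis)
qed

lemma continuous_fexp: "continuous_on S (fexp k)"
  unfolding fexp_def by (intro continuous_intros)

lemma periodic_cont_fexp: "periodic_cont (fexp k)"
  by (simp add: periodic_cont_def continuous_fexp fexp_periodic)


lemma periodic_nat:
  assumes "periodic_cont h"
  shows "h (x + (2 * pi * real m) *\<^sub>R axis i 1) = h x"
proof (induction m arbitrary: x)
  case 0 then show ?case by simp
next
  case (Suc m)
  have "x + (2 * pi * real (Suc m)) *\<^sub>R axis i 1 = (x + (2 * pi * real m) *\<^sub>R axis i 1) + (2 * pi) *\<^sub>R axis i 1"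
    by (simp add: algebra_simps scaleR_add_left)
  have per: "\<And>y. h (y + (2*pi) *\<^sub>R axis i 1) = h y" using assms by (simp add: periodic_cont_def)
  show ?case unfolding \<open>x + _ = _\<close> per by (rule Suc.IH)
qed

lemma periodic_int:
  assumes "periodic_cont h"
  shows "h (x + (2 * pi * real_of_int m) *\<^sub>R axis i 1) = h x"
proof (cases "m \<ge> 0")
  case True
  then obtain n where "m = int n" by (metis nonneg_int_cases)
  then show ?thesis using periodic_nat[OF assms] by simp
next
  case False
  then obtain n where n: "m = - int n" by (metis nonpos_int_cases linorder_linear)
  define y where "y = x + (2 * pi * real_of_int m) *\<^sub>R axis i 1"
  have "x = y + (2 * pi * real n) *\<^sub>R axis i 1" by (simp add: y_def n)
  then have "h x = h y" using periodic_nat[OF assms, of y n i] by metis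
  then show ?thesis by (simp add: y_def)
qed

lemma periodic_vec:
  assumes "periodic_cont h"
  shows "h (x + (\<chi> i. 2 * pi * real_of_int (n i))) = h x"
proof -
  have "h (x + (\<chi> i. if i \<in> A then 2 * pi * real_of_int (n i) else 0)) = h x" if "finite A" for A
    using that
  proof (induction A rule: finite_induct)
    case empty
    have "(\<chi> i. if i \<in> {} then 2 * pi * real_of_int (n i) else 0) = (0::real^'a)"
      by (simp add: vec_eq_iff)
    then show ?case by simp
  next
    case (insert a A)
    have "(\<chi> i. if i \<in> insert a A then 2 * pi * real_of_int (n i) else 0) =
          (\<chi> i. if i \<in> A then 2 * pi * real_of_int (n i) else 0) + (2 * pi * real_of_int (n a)) *\<^sub>R axis a (1::real)"
      using insert by (auto simp: vec_eq_iff axis_def)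
    then show ?case using insert periodic_int[OF assms] by (simp add: add.assoc[symmetric])
  qed
  from this[of UNIV] show ?thesis by simp
qed

lemma torus_cell_reduce:
  assumes "periodic_cont h"
  shows "\<exists>y\<in>torus_cell. h x = h y"
proof -
  define n where "n i = \<lfloor>x $ i / (2 * pi)\<rfloor>" for i
  define y where "y = x - (\<chi> i. 2 * pi * real_of_int (n i))"
  have "y \<in> torus_cell"
    unfolding torus_cell_def mem_box_cart
  proof
    fix i
    have a: "real_of_int (n i) \<le> x $ i / (2 * pi)" "x $ i / (2 * pi) < real_of_int (n i) + 1"
      unfolding n_def by linarith+
    have "2 * pi * real_of_int (n i) \<le> x $ i" using a(1) pi_gt_zero by (simp add: field_simps)
    moreover have "x $ i < 2 * pi * real_of_int (n i) + 2 * pi" using a(2) pi_gt_zero by (simp add: field_simps)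
    ultimately show "0 $ i \<le> y $ i \<and> y $ i \<le> (\<chi> i. 2 * pi) $ i" by (simp add: y_def)
  qed
  moreover have "h x = h y" using periodic_vec[OF assms, of y n] by (simp add: y_def)
  ultimately show ?thesis by blast
qed

lemma periodic_bounded:
  assumes "periodic_cont h"
  shows "\<exists>B. \<forall>x. cmod (h x) \<le> B"
proof -
  have "compact (h ` torus_cell)"
    using assms by (auto simp: periodic_cont_def torus_cell_def intro!: compact_continuous_image continuous_on_subset[of UNIV])
  then obtain B where B: "\<forall>y\<in>h ` torus_cell. cmod y \<le> B" by (meson compact_imp_bounded bounded_iff)
  show ?thesis
  proof (intro exI allI)
    fix x
    obtain y where "y \<in> torus_cell" "h x = h y" using torus_cell_reduce[OF assms] by blast
    then show "cmod (h x) \<le> B" using B by auto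
  qed
qed

lemma periodic_cont_diff:
  "periodic_cont h \<Longrightarrow> periodic_cont g \<Longrightarrow> periodic_cont (\<lambda>x. h x - g x)"
  by (simp add: periodic_cont_def continuous_on_diff)

lemma periodic_eq_on_cell:
  assumes "periodic_cont h" "periodic_cont g" "\<And>x. x \<in> torus_cell \<Longrightarrow> h x = g x"
  shows "h = g"
proof
  fix x
  obtain y where "y \<in> torus_cell" "h x - g x = h y - g y"
    using torus_cell_reduce[OF periodic_cont_diff[OF assms(1,2)]] by blast
  then show "h x = g x" using assms(3) by simp
qed

lemma integral_shift_axis:
  fixes f :: "real^'n \<Rightarrow> complex"
  assumes cont: "continuous_on UNIV f" and per: "\<And>x. f (x + (2*pi) *\<^sub>R axis i 1) = f x"
    and s: "0 \<le> s" "s \<le> 2*pi"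
  shows "integral torus_cell (\<lambda>x. f (x + s *\<^sub>R axis i 1)) = integral torus_cell f"
proof -
  define b :: "real^'n" where "b = (\<chi> j. 2*pi)"
  define v :: "real^'n" where "v = s *\<^sub>R axis i 1"
  define w :: "real^'n" where "w = (s - 2*pi) *\<^sub>R axis i 1"
  define c where "c = 2*pi - s"
  define b1 :: "real^'n" where "b1 = (\<chi> j. if j = i then c else 2*pi)"
  define a2 :: "real^'n" where "a2 = (\<chi> j. if j = i then c else 0)"
  define b2 :: "real^'n" where "b2 = (\<chi> j. if j = i then s else 2*pi)"
  have cell: "torus_cell = cbox 0 b" by (simp add: torus_cell_def b_def)
  have k: "axis i (1::real) \<in> Basis" by simp
  have inn: "\<And>x::real^'n. x \<bullet> axis i 1 = x $ i" by (simp add: cart_eq_inner_axis)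
  have intg: "\<And>g::real^'n\<Rightarrow>complex. continuous_on UNIV g \<Longrightarrow> g integrable_on cbox u z" for u z
    by (rule integrable_continuous) (auto intro: continuous_on_subset)
  define g where "g = (\<lambda>x. f (x + v))"
  have gc: "continuous_on UNIV g" unfolding g_def
    by (intro continuous_on_compose2[OF cont] continuous_intros) auto
  have sp1: "cbox 0 b \<inter> {x. x$i \<le> c} = cbox 0 b1"
  proof -
    have r: "(\<chi> j. if j = i then min (b$i) c else b$j) = b1"
      using s by (simp add: vec_eq_iff b_def b1_def c_def)
    have "cbox 0 b \<inter> {x. x$i \<le> c} = cbox 0 (\<chi> j. if j = i then min (b$i) c else b$j)"
      using interval_split_cart(1)[where a=0 and b=b and k=i and c=c] by (simp only: interval_cbox_cart)
    then show ?thesis by (simp only: r)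
  qed
  have sp2: "cbox 0 b \<inter> {x. c \<le> x$i} = cbox a2 b"
  proof -
    have r: "(\<chi> j. if j = i then max ((0::real^'n)$i) c else (0::real^'n)$j) = a2"
      using s by (simp add: vec_eq_iff a2_def c_def)
    have "cbox 0 b \<inter> {x. c \<le> x$i} = cbox (\<chi> j. if j = i then max ((0::real^'n)$i) c else (0::real^'n)$j) b"
      using interval_split_cart(2)[where a=0 and b=b and k=i and c=c] by (simp only: interval_cbox_cart)
    then show ?thesis by (simp only: r)
  qed
  have sp3: "cbox 0 b \<inter> {x. x$i \<le> s} = cbox 0 b2"
  proof -
    have r: "(\<chi> j. if j = i then min (b$i) s else b$j) = b2"
      using s by (simp add: vec_eq_iff b_def b2_def)
    have "cbox 0 b \<inter> {x. x$i \<le> s} = cbox 0 (\<chi> j. if j = i then min (b$i) s else b$j)"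
      using interval_split_cart(1)[where a=0 and b=b and k=i and c=s] by (simp only: interval_cbox_cart)
    then show ?thesis by (simp only: r)
  qed
  have sp4: "cbox 0 b \<inter> {x. s \<le> x$i} = cbox v b"
  proof -
    have r: "(\<chi> j. if j = i then max ((0::real^'n)$i) s else (0::real^'n)$j) = v"
      using s by (simp add: vec_eq_iff v_def axis_def)
    have "cbox 0 b \<inter> {x. s \<le> x$i} = cbox (\<chi> j. if j = i then max ((0::real^'n)$i) s else (0::real^'n)$j) b"
      using interval_split_cart(2)[where a=0 and b=b and k=i and c=s] by (simp only: interval_cbox_cart)
    then show ?thesis by (simp only: r)
  qed
  have "integral (cbox 0 b) g = integral (cbox 0 b \<inter> {x. x \<bullet> axis i 1 \<le> c}) g + integral (cbox 0 b \<inter> {x. x \<bullet> axis i 1 \<ge> c}) g"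
    by (rule integral_split[OF intg[OF gc] k])
  also have "\<dots> = integral (cbox 0 b1) g + integral (cbox a2 b) g"
    by (simp add: inn sp1 sp2)
  finally have e1: "integral (cbox 0 b) g = integral (cbox 0 b1) g + integral (cbox a2 b) g" .
  have "integral (cbox 0 b) f = integral (cbox 0 b \<inter> {x. x \<bullet> axis i 1 \<le> s}) f + integral (cbox 0 b \<inter> {x. x \<bullet> axis i 1 \<ge> s}) f"
    by (rule integral_split[OF intg[OF cont] k])
  also have "\<dots> = integral (cbox 0 b2) f + integral (cbox v b) f"
    by (simp add: inn sp3 sp4)
  finally have e2: "integral (cbox 0 b) f = integral (cbox 0 b2) f + integral (cbox v b) f" .
  have A: "integral (cbox 0 b1) g = integral (cbox v b) f"
  proof -
    have "(f has_integral integral (cbox v b) f) (cbox v b)"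
      using intg[OF cont] by (simp add: integrable_integral)
    from has_integral_affinity'[OF this, of 1 v]
    have "((\<lambda>x. f (x + v)) has_integral integral (cbox v b) f) (cbox 0 (b - v))" by simp
    moreover have "b - v = b1" by (simp add: vec_eq_iff b_def v_def b1_def c_def axis_def)
    ultimately have "((\<lambda>x. f (x + v)) has_integral integral (cbox v b) f) (cbox 0 b1)" by simp
    then show ?thesis unfolding g_def by (rule integral_unique)
  qed
  have B: "integral (cbox a2 b) g = integral (cbox 0 b2) f"
  proof -
    have gw: "g x = f (x + w)" for x
    proof -
      have "x + v = (x + w) + (2*pi) *\<^sub>R axis i 1"
        by (simp add: v_def w_def algebra_simps scaleR_diff_left)
      then show ?thesis unfolding g_def using per[of "x + w"] by (simp only:)
    qed
    have "(f has_integral integral (cbox 0 b2) f) (cbox 0 b2)"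
      using intg[OF cont] by (simp add: integrable_integral)
    from has_integral_affinity'[OF this, of 1 w]
    have "((\<lambda>x. f (x + w)) has_integral integral (cbox 0 b2) f) (cbox (0 - w) (b2 - w))" by simp
    moreover have "0 - w = a2" by (simp add: vec_eq_iff w_def a2_def c_def axis_def)
    moreover have "b2 - w = b" by (simp add: vec_eq_iff w_def b2_def b_def axis_def)
    ultimately have "((\<lambda>x. f (x + w)) has_integral integral (cbox 0 b2) f) (cbox a2 b)" by simp
    moreover have "g = (\<lambda>x. f (x + w))" using gw by auto
    ultimately show ?thesis by (simp add: integral_unique)
  qed
  show ?thesis
    unfolding cell using e1 e2 A B by (simp add: g_def v_def)
qed

lemma content_cell: "Henstock_Kurzweil_Integration.content (torus_cell :: (real^'n) set) = (2*pi) ^ CARD('n)"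
proof -
  have "torus_cell \<noteq> ({} :: (real^'n) set)"
    unfolding torus_cell_def by (auto simp: box_ne_empty(1) cart_eq_inner_axis[symmetric] Basis_vec_def)
  then show ?thesis unfolding torus_cell_def by (simp add: content_cbox_cart)
qed

lemma integral_fexp:
  "integral torus_cell (fexp k :: real^'n \<Rightarrow> complex) = (if k = 0 then (2*pi) ^ CARD('n) else 0)"
proof (cases "k = 0")
  case True
  have "fexp 0 = (\<lambda>x::real^'n. 1::complex)" by (rule ext) simp
  moreover have "integral torus_cell (\<lambda>x::real^'n. 1::complex) = Henstock_Kurzweil_Integration.content (torus_cell::(real^'n) set) *\<^sub>R 1"
    unfolding torus_cell_def by (rule integral_const)
  ultimately have "integral torus_cell (fexp 0 :: real^'n \<Rightarrow> complex) = of_real ((2*pi) ^ CARD('n))"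
    by (simp add: content_cell scaleR_conv_of_real)
  then show ?thesis using True by simp
next
  case False
  then obtain i where ki: "k $ i \<noteq> 0" by (auto simp: vec_eq_iff)
  define s where "s = pi / \<bar>real_of_int (k $ i)\<bar>"
  have kabs: "\<bar>real_of_int (k $ i)\<bar> \<ge> 1" using ki by linarith
  have s0: "0 \<le> s" by (simp add: s_def)
  have "s \<le> pi" unfolding s_def using kabs pi_gt_zero by (simp add: divide_le_eq)
  then have s1: "s \<le> 2*pi" using pi_gt_zero by linarith
  have cism: "cis (s * real_of_int (k $ i)) = -1"
  proof (cases "k $ i > 0")
    case True
    then have "s * real_of_int (k $ i) = pi" using ki by (simp add: s_def)
    then show ?thesis by simp
  next
    case False
    then have "s * real_of_int (k $ i) = - pi" using ki by (simp add: s_def)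
    then show ?thesis by (simp add: cis_cnj[symmetric])
  qed
  have "integral torus_cell (\<lambda>x. fexp k (x + s *\<^sub>R axis i 1)) = integral torus_cell (fexp k)"
    by (rule integral_shift_axis[OF continuous_fexp fexp_periodic s0 s1])
  moreover have "(\<lambda>x. fexp k (x + s *\<^sub>R axis i 1)) = (\<lambda>x. - fexp k x)"
    by (simp add: fexp_shift fexp_axis cism)
  ultimately have "- integral torus_cell (fexp k) = integral torus_cell (fexp k)"
    by (simp add: integral_neg)
  then show ?thesis using False by simp
qed





lemma cont_integrable: "continuous_on UNIV (f :: real^'n \<Rightarrow> complex) \<Longrightarrow> f integrable_on torus_cell"
  unfolding torus_cell_def by (rule integrable_continuous) (auto intro: continuous_on_subset)

inductive_set trig :: "(real^'n \<Rightarrow> complex) set" where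
  trig_exp: "fexp k \<in> trig"
| trig_add: "f \<in> trig \<Longrightarrow> g \<in> trig \<Longrightarrow> (\<lambda>x. f x + g x) \<in> trig"
| trig_scale: "f \<in> trig \<Longrightarrow> (\<lambda>x. c * f x) \<in> trig"

lemma trig_const: "(\<lambda>x. c) \<in> trig"
  using trig_scale[OF trig_exp[of 0], of c] by simp

lemma trig_mult_exp: "g \<in> trig \<Longrightarrow> (\<lambda>x. fexp k x * g x) \<in> trig"
proof (induction g rule: trig.induct)
  case (trig_exp j) then show ?case by (simp add: fexp_add[symmetric] trig.trig_exp)
next
  case (trig_add f g) then show ?case by (simp add: distrib_left trig.trig_add)
next
  case (trig_scale f c)
  have "(\<lambda>x. fexp k x * (c * f x)) = (\<lambda>x. c * (fexp k x * f x))" by (simp add: algebra_simps)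
  then show ?case using trig_scale by (simp add: trig.trig_scale)
qed

lemma trig_mult: "f \<in> trig \<Longrightarrow> g \<in> trig \<Longrightarrow> (\<lambda>x. f x * g x) \<in> trig"
proof (induction f rule: trig.induct)
  case (trig_exp k) then show ?case by (rule trig_mult_exp)
next
  case (trig_add f1 f2) then show ?case by (simp add: distrib_right trig.trig_add)
next
  case (trig_scale f c)
  have "(\<lambda>x. c * f x * g x) = (\<lambda>x. c * (f x * g x))" by (simp add: algebra_simps)
  then show ?case using trig_scale by (simp add: trig.trig_scale)
qed

lemma trig_sum: "finite A \<Longrightarrow> (\<And>a. a \<in> A \<Longrightarrow> f a \<in> trig) \<Longrightarrow> (\<lambda>x. \<Sum>a\<in>A. f a x) \<in> trig"
proof (induction A rule: finite_induct)
  case empty then show ?case using trig_const[of 0] by simp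
next
  case (insert a A) then show ?case by (simp add: trig.trig_add)
qed

lemma trig_cont: "f \<in> trig \<Longrightarrow> continuous_on UNIV f"
  by (induction f rule: trig.induct) (auto intro!: continuous_intros continuous_fexp)

lemma fexp_unit: "fexp (axis i 1) x = cis (x $ i)"
proof -
  have "\<And>j. x $ j * real_of_int (axis i (1::int) $ j) = (if j = i then x $ i else 0)"
    by (simp add: axis_def)
  then show ?thesis by (simp add: fexp_def)
qed

lemma trig_cos: "(\<lambda>x. complex_of_real (cos (x $ i))) \<in> trig"
proof -
  have eq: "(\<lambda>x. complex_of_real (cos (x $ i))) = (\<lambda>x. (1/2) * fexp (axis i 1) x + (1/2) * fexp (- axis i 1) x)"
    by (rule ext) (simp add: fexp_neg fexp_unit complex_eq_iff)
  show ?thesis unfolding eq by (intro trig.trig_add trig.trig_scale trig.trig_exp)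
qed

lemma trig_sin: "(\<lambda>x. complex_of_real (sin (x $ i))) \<in> trig"
proof -
  have eq: "(\<lambda>x. complex_of_real (sin (x $ i))) = (\<lambda>x. (-\<i>/2) * fexp (axis i 1) x + (\<i>/2) * fexp (- axis i 1) x)"
    by (rule ext) (simp add: fexp_neg fexp_unit complex_eq_iff)
  show ?thesis unfolding eq by (intro trig.trig_add trig.trig_scale trig.trig_exp)
qed

definition phi :: "real^'n \<Rightarrow> (real^'n) \<times> (real^'n)" where
  "phi x = ((\<chi> i. cos (x $ i)), (\<chi> i. sin (x $ i)))"

lemma basis_cases:
  assumes "(b :: (real^'n) \<times> (real^'n)) \<in> Basis"
  obtains i where "b = (axis i 1, 0)" | i where "b = (0, axis i 1)"
  using assms unfolding Basis_prod_def Basis_vec_def by auto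

lemma lin_expand:
  fixes g :: "(real^'n) \<times> (real^'n) \<Rightarrow> real"
  assumes "linear g"
  shows "g z = (\<Sum>b\<in>Basis. (z \<bullet> b) * g b)"
proof -
  have "g z = g (\<Sum>b\<in>Basis. (z \<bullet> b) *\<^sub>R b)" by (simp only: euclidean_representation)
  also have "\<dots> = (\<Sum>b\<in>Basis. (z \<bullet> b) *\<^sub>R g b)" by (simp only: linear_sum[OF assms] linear_scale[OF assms])
  finally show ?thesis by simp
qed

lemma phi_inner_trig:
  assumes "b \<in> Basis"
  shows "(\<lambda>x::real^'n. complex_of_real (phi x \<bullet> b)) \<in> trig"
  using assms
proof (cases rule: basis_cases)
  case (1 i)
  have "phi x \<bullet> b = cos (x $ i)" for x
    unfolding 1 phi_def inner_Pair by (simp add: inner_axis)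
  then have "(\<lambda>x::real^'n. complex_of_real (phi x \<bullet> b)) = (\<lambda>x. complex_of_real (cos (x $ i)))" by simp
  then show ?thesis using trig_cos by (simp only:)
next
  case (2 i)
  have "phi x \<bullet> b = sin (x $ i)" for x
    unfolding 2 phi_def inner_Pair by (simp add: inner_axis)
  then have "(\<lambda>x::real^'n. complex_of_real (phi x \<bullet> b)) = (\<lambda>x. complex_of_real (sin (x $ i)))" by simp
  then show ?thesis using trig_sin by (simp only:)
qed

lemma rpf_trig:
  assumes "real_polynomial_function g"
  shows "(\<lambda>x. complex_of_real (g (phi x))) \<in> trig"
  using assms
proof (induction g rule: real_polynomial_function.induct)
  case (linear g)
  have lin: "linear g" using linear by (rule bounded_linear.linear)
  have eq: "(\<lambda>x. complex_of_real (g (phi x))) = (\<lambda>x. \<Sum>b\<in>Basis. complex_of_real (phi x \<bullet> b) * complex_of_real (g b))"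
    by (rule ext) (subst lin_expand[OF lin], simp only: of_real_sum of_real_mult)
  show ?case unfolding eq
  proof (rule trig_sum)
    fix b :: "(real^'a) \<times> (real^'a)" assume "b \<in> Basis"
    then show "(\<lambda>x. complex_of_real (phi x \<bullet> b) * complex_of_real (g b)) \<in> trig"
      by (rule trig_mult[OF phi_inner_trig trig_const])
  qed simp
next
  case (const c) then show ?case by (rule trig_const)
next
  case (add f g) then show ?case by (simp add: trig.trig_add)
next
  case (mult f g) then show ?case by (simp add: trig_mult)
qed

lemma fourier_coeff_zero_trig:
  assumes hc: "continuous_on UNIV h" and z: "\<And>k. fourier_coeff h k = 0" and P: "P \<in> trig"
  shows "integral torus_cell (\<lambda>x. h x * cnj (P x)) = 0"
  using P
proof (induction P rule: trig.induct)
  case (trig_exp k)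
  have "(2 * pi) ^ CARD('n) \<noteq> 0" by simp
  then show ?case using z[of k] unfolding fourier_coeff_def by simp
next
  case (trig_add f g)
  have "integral torus_cell (\<lambda>x. h x * cnj (f x + g x)) =
        integral torus_cell (\<lambda>x. h x * cnj (f x) + h x * cnj (g x))"
    by (simp add: distrib_left)
  also have "\<dots> = integral torus_cell (\<lambda>x. h x * cnj (f x)) + integral torus_cell (\<lambda>x. h x * cnj (g x))"
    using trig_cont[OF trig_add.hyps(1)] trig_cont[OF trig_add.hyps(2)] hc
    by (intro integral_add cont_integrable continuous_intros) auto
  finally show ?case using trig_add by simp
next
  case (trig_scale f c)
  have "integral torus_cell (\<lambda>x. h x * cnj (c * f x)) = integral torus_cell (\<lambda>x. cnj c * (h x * cnj (f x)))"
    by (simp add: algebra_simps)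
  then show ?case using trig_scale by simp
qed


lemma phi_fiber:
  assumes "periodic_cont h" "phi x = phi y"
  shows "h x = h y"
proof -
  have "\<forall>i. \<exists>n::int. x $ i = y $ i + 2 * pi * n"
  proof
    fix i
    from assms(2) have "sin (x $ i) = sin (y $ i) \<and> cos (x $ i) = cos (y $ i)"
      by (simp add: phi_def vec_eq_iff)
    then show "\<exists>n::int. x $ i = y $ i + 2 * pi * n" by (simp add: sin_cos_eq_iff)
  qed
  then obtain n where n: "\<And>i. x $ i = y $ i + 2 * pi * real_of_int (n i)" by metis
  then have "x = y + (\<chi> i. 2 * pi * real_of_int (n i))" by (simp add: vec_eq_iff)
  then show ?thesis using periodic_vec[OF assms(1)] by simp
qed

lemma continuous_phi: "continuous_on A phi"
  unfolding phi_def by (auto intro!: continuous_intros continuous_on_vec_lambda)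

lemma trig_approx:
  fixes h :: "real^'n \<Rightarrow> complex"
  assumes hp: "periodic_cont h" and e: "e > 0"
  shows "\<exists>P\<in>trig. \<forall>x\<in>torus_cell. cmod (h x - P x) \<le> e"
proof -
  have hc: "continuous_on UNIV h" using hp by (simp add: periodic_cont_def)
  define S :: "((real^'n) \<times> (real^'n)) set" where "S = phi ` torus_cell"
  have cc: "compact (torus_cell :: (real^'n) set)" by (simp add: torus_cell_def)
  have cS: "compact S" unfolding S_def by (rule compact_continuous_image[OF continuous_phi cc])
  define H :: "(real^'n) \<times> (real^'n) \<Rightarrow> complex" where "H z = h (SOME x. x \<in> torus_cell \<and> phi x = z)" for z
  have Hphi: "H (phi x) = h x" if "x \<in> torus_cell" for x
  proof -
    have "\<exists>y. y \<in> torus_cell \<and> phi y = phi x" using that by blast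
    then have "(SOME y. y \<in> torus_cell \<and> phi y = phi x) \<in> torus_cell \<and> phi (SOME y. y \<in> torus_cell \<and> phi y = phi x) = phi x"
      by (rule someI_ex)
    then show ?thesis unfolding H_def using phi_fiber[OF hp] by metis
  qed
  have Hc: "continuous_on S H"
  proof (subst continuous_on_closed_vimage[OF compact_imp_closed[OF cS]], intro allI impI)
    fix T :: "complex set" assume T: "closed T"
    have eq: "H -` T \<inter> S = phi ` (torus_cell \<inter> h -` T)"
      unfolding S_def using Hphi by auto
    have "closed (h -` T)" using T hc by (rule closed_vimage)
    then have "compact (torus_cell \<inter> h -` T)" using cc by (simp add: compact_Int_closed)
    then have "compact (phi ` (torus_cell \<inter> h -` T))" by (rule compact_continuous_image[OF continuous_phi])
    then show "closed (H -` T \<inter> S)" unfolding eq by (rule compact_imp_closed)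
  qed
  have e2: "e/2 > 0" using e by simp
  obtain g1 where g1: "real_polynomial_function g1" "\<And>z. z \<in> S \<Longrightarrow> \<bar>Re (H z) - g1 z\<bar> < e/2"
    using Stone_Weierstrass_real_polynomial_function[OF cS continuous_on_Re[OF Hc] e2] by blast
  obtain g2 where g2: "real_polynomial_function g2" "\<And>z. z \<in> S \<Longrightarrow> \<bar>Im (H z) - g2 z\<bar> < e/2"
    using Stone_Weierstrass_real_polynomial_function[OF cS continuous_on_Im[OF Hc] e2] by blast
  define P where "P x = complex_of_real (g1 (phi x)) + \<i> * complex_of_real (g2 (phi x))" for x
  have "P \<in> trig" unfolding P_def
    using rpf_trig[OF g1(1)] rpf_trig[OF g2(1)] by (intro trig.trig_add trig.trig_scale) auto
  moreover have "cmod (h x - P x) \<le> e" if x: "x \<in> torus_cell" for x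
  proof -
    have z: "phi x \<in> S" using x by (simp add: S_def)
    have "cmod (h x - P x) \<le> \<bar>Re (h x - P x)\<bar> + \<bar>Im (h x - P x)\<bar>" by (rule cmod_le)
    also have "\<dots> = \<bar>Re (H (phi x)) - g1 (phi x)\<bar> + \<bar>Im (H (phi x)) - g2 (phi x)\<bar>"
      using Hphi[OF x] by (simp add: P_def)
    also have "\<dots> \<le> e" using g1(2)[OF z] g2(2)[OF z] by simp
    finally show ?thesis .
  qed
  ultimately show ?thesis by blast
qed

lemma fourier_unique_zero:
  fixes h :: "real^'n \<Rightarrow> complex"
  assumes hp: "periodic_cont h" and z: "\<And>k. fourier_coeff h k = 0"
  shows "h = (\<lambda>x. 0)"
proof -
  have hc: "continuous_on UNIV h" using hp by (simp add: periodic_cont_def)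
  obtain B where B: "\<And>x. cmod (h x) \<le> B" using periodic_bounded[OF hp] by blast
  have B0: "B \<ge> 0" using B[of 0] norm_ge_zero order_trans by blast
  define V where "V = Henstock_Kurzweil_Integration.content (torus_cell :: (real^'n) set)"
  have V0: "V \<ge> 0" by (simp add: V_def)
  define I where "I = integral torus_cell (\<lambda>x. h x * cnj (h x))"
  have bound: "cmod I \<le> B * V * e" if e: "e > 0" for e
  proof -
    obtain P where P: "P \<in> trig" "\<And>x. x \<in> torus_cell \<Longrightarrow> cmod (h x - P x) \<le> e"
      using trig_approx[OF hp e] by blast
    have Pc: "continuous_on UNIV P" by (rule trig_cont[OF P(1)])
    have "I = integral torus_cell (\<lambda>x. h x * cnj (h x - P x) + h x * cnj (P x))"
      unfolding I_def by (simp add: algebra_simps)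
    also have "\<dots> = integral torus_cell (\<lambda>x. h x * cnj (h x - P x)) + integral torus_cell (\<lambda>x. h x * cnj (P x))"
      using hc Pc by (intro integral_add cont_integrable continuous_intros) auto
    also have "\<dots> = integral torus_cell (\<lambda>x. h x * cnj (h x - P x))"
      using fourier_coeff_zero_trig[OF hc z P(1)] by simp
    finally have Ieq: "I = integral torus_cell (\<lambda>x. h x * cnj (h x - P x))" .
    have int: "((\<lambda>x. h x * cnj (h x - P x)) has_integral I) (cbox 0 (\<chi> i. 2*pi))"
      unfolding Ieq torus_cell_def[symmetric]
      using hc Pc by (intro integrable_integral cont_integrable continuous_intros) auto
    have "cmod I \<le> (B * e) * V"
      unfolding V_def torus_cell_def
    proof (rule has_integral_bound[OF _ int])
      show "0 \<le> B * e" using B0 e by simp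
      fix x :: "real^'n" assume x: "x \<in> cbox 0 (\<chi> i. 2*pi)"
      have "cmod (h x * cnj (h x - P x)) = cmod (h x) * cmod (h x - P x)"
        by (simp only: norm_mult complex_mod_cnj)
      also have "\<dots> \<le> B * e" using B[of x] P(2)[of x] x B0
        by (intro mult_mono) (auto simp: torus_cell_def)
      finally show "cmod (h x * cnj (h x - P x)) \<le> B * e" .
    qed
    then show ?thesis by (simp add: algebra_simps)
  qed
  have I0: "I = 0"
  proof (rule ccontr)
    assume "I \<noteq> 0"
    then have n: "cmod I > 0" by simp
    define e where "e = cmod I / (2 * (B * V + 1))"
    have BV: "B * V \<ge> 0" using B0 V0 by simp
    have e0: "e > 0" unfolding e_def using n BV by simp
    have "B * V * e < cmod I"
    proof -
      have "B * V * e = cmod I * (B * V / (2 * (B * V + 1)))" unfolding e_def by (simp add: field_simps)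
      also have "\<dots> < cmod I * 1"
        using n BV by (intro mult_strict_left_mono) (auto simp: field_simps)
      finally show ?thesis by simp
    qed
    then show False using bound[OF e0] by simp
  qed
  have int2: "((\<lambda>x. (cmod (h x))^2) has_integral 0) (cbox 0 (\<chi> i. 2*pi))"
  proof -
    have "((\<lambda>x. h x * cnj (h x)) has_integral I) torus_cell"
      unfolding I_def using hc by (intro integrable_integral cont_integrable continuous_intros) auto
    from has_integral_linear[OF this bounded_linear_Re]
    have "((Re \<circ> (\<lambda>x. h x * cnj (h x))) has_integral Re I) torus_cell" .
    moreover have "Re \<circ> (\<lambda>x. h x * cnj (h x)) = (\<lambda>x. (cmod (h x))^2)"
      by (rule ext) (simp add: complex_norm_square[symmetric] del: of_real_power)
    ultimately show ?thesis using I0 by (simp add: torus_cell_def)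
  qed
  have "h x = 0" if x: "x \<in> torus_cell" for x
  proof -
    have "(cmod (h x))^2 = 0"
    proof (rule has_integral_0_cbox_imp_0[OF _ _ int2])
      show "continuous_on (cbox 0 (\<chi> i. 2*pi)) (\<lambda>x. (cmod (h x))^2)"
        using hc by (intro continuous_intros) (auto intro: continuous_on_subset)
      show "box 0 (\<chi> i. 2*pi) \<noteq> ({} :: (real^'n) set)"
        by (auto simp: box_ne_empty(2) cart_eq_inner_axis[symmetric] Basis_vec_def)
      show "x \<in> cbox 0 (\<chi> i. 2 * pi)" using x by (simp add: torus_cell_def)
    qed auto
    then show ?thesis by simp
  qed
  moreover have "periodic_cont (\<lambda>x::real^'n. 0::complex)" by (simp add: periodic_cont_def)
  ultimately show ?thesis using periodic_eq_on_cell[OF hp] by blast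
qed




lemma integral_fexp_cnj:
  "integral torus_cell (\<lambda>x::real^'n. fexp k x * cnj (fexp m x)) = (if k = m then (2*pi) ^ CARD('n) else 0)"
  using integral_fexp[of "k - m"] by (simp add: fexp_diff[symmetric])

lemma integral_finite_trig:
  assumes "finite F"
  shows "integral torus_cell (\<lambda>x::real^'n. (\<Sum>k\<in>F. a k * fexp k x) * cnj (fexp m x)) =
         (if m \<in> F then a m * (2*pi) ^ CARD('n) else 0)"
proof -
  have "integral torus_cell (\<lambda>x::real^'n. (\<Sum>k\<in>F. a k * fexp k x) * cnj (fexp m x)) =
        integral torus_cell (\<lambda>x::real^'n. \<Sum>k\<in>F. a k * (fexp k x * cnj (fexp m x)))"
    by (simp add: sum_distrib_right mult.assoc)
  also have "\<dots> = (\<Sum>k\<in>F. integral torus_cell (\<lambda>x::real^'n. a k * (fexp k x * cnj (fexp m x))))"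
    using assms by (intro integral_sum cont_integrable) (auto intro!: continuous_intros continuous_fexp)
  also have "\<dots> = (\<Sum>k\<in>F. (if m = k then a k * (2*pi) ^ CARD('n) else 0))"
    by (intro sum.cong refl) (simp add: integral_fexp_cnj)
  also have "\<dots> = (if m \<in> F then a m * (2*pi) ^ CARD('n) else 0)"
    using assms by (simp add: sum.delta)
  finally show ?thesis .
qed

lemma represents_finite:
  assumes "finite F"
  shows "represents (\<lambda>x::real^'n. \<Sum>k\<in>F. a k * fexp k x) (\<lambda>k. if k \<in> F then a k else 0)"
  unfolding represents_def
proof
  show "periodic_cont (\<lambda>x::real^'n. \<Sum>k\<in>F. a k * fexp k x)"
    unfolding periodic_cont_def by (auto intro!: continuous_intros continuous_fexp simp: fexp_periodic)
  show "\<forall>m. fourier_coeff (\<lambda>x::real^'n. \<Sum>k\<in>F. a k * fexp k x) m = (if m \<in> F then a m else 0)"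
    unfolding fourier_coeff_def integral_finite_trig[OF assms] by simp
qed

lemma fourier_coeff_diff:
  assumes "continuous_on UNIV h" "continuous_on UNIV g"
  shows "fourier_coeff (\<lambda>x::real^'n. h x - g x) k = fourier_coeff h k - fourier_coeff g k"
proof -
  have "integral torus_cell (\<lambda>x. (h x - g x) * cnj (fexp k x)) =
        integral torus_cell (\<lambda>x. h x * cnj (fexp k x) - g x * cnj (fexp k x))"
    by (simp add: algebra_simps)
  also have "\<dots> = integral torus_cell (\<lambda>x. h x * cnj (fexp k x)) - integral torus_cell (\<lambda>x. g x * cnj (fexp k x))"
    using assms by (intro integral_diff cont_integrable) (auto intro!: continuous_intros continuous_fexp)
  finally have eq: "integral torus_cell (\<lambda>x. (h x - g x) * cnj (fexp k x)) =
     integral torus_cell (\<lambda>x. h x * cnj (fexp k x)) - integral torus_cell (\<lambda>x. g x * cnj (fexp k x))" .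
  show ?thesis unfolding fourier_coeff_def eq by (rule right_diff_distrib)
qed

lemma represents_unique:
  fixes h g :: "real^'n \<Rightarrow> complex"
  assumes "represents h c" "represents g c"
  shows "h = g"
proof -
  have hp: "periodic_cont h" and gp: "periodic_cont g" using assms by (auto simp: represents_def)
  have "(\<lambda>x. h x - g x) = (\<lambda>x. 0)"
  proof (rule fourier_unique_zero[OF periodic_cont_diff[OF hp gp]])
    fix k
    show "fourier_coeff (\<lambda>x. h x - g x) k = 0"
      using hp gp assms by (simp add: fourier_coeff_diff periodic_cont_def represents_def)
  qed
  then show ?thesis by (simp add: fun_eq_iff)
qed

lemma some_represents:
  fixes h :: "real^'n \<Rightarrow> complex"
  assumes "represents h c"
  shows "(SOME h. represents h c) = h"
proof -
  have "represents (SOME h. represents h c) c" by (rule someI[of "\<lambda>h. represents h c" h, OF assms])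
  then show ?thesis using assms by (rule represents_unique)
qed


lemma series_abs:
  assumes as: "(\<lambda>k. cmod (a k)) summable_on UNIV"
  shows "(\<lambda>k. norm (a k * fexp k x)) summable_on A"
proof -
  have "(\<lambda>k. norm (a k * fexp k x)) = (\<lambda>k. cmod (a k))" by (simp add: norm_mult)
  then show ?thesis using summable_on_subset_banach[OF as, of A] by simp
qed

lemma series_summable:
  assumes as: "(\<lambda>k. cmod (a k)) summable_on UNIV"
  shows "(\<lambda>k. a k * fexp k x) summable_on A"
  by (rule abs_summable_summable[OF series_abs[OF as]])

lemma series_tail:
  fixes a :: "int^'n \<Rightarrow> complex"
  assumes as: "(\<lambda>k. cmod (a k)) summable_on UNIV" and F: "finite F"
  shows "cmod ((\<Sum>\<^sub>\<infinity>k. a k * fexp k x) - (\<Sum>k\<in>F. a k * fexp k x)) \<le> (\<Sum>\<^sub>\<infinity>k. cmod (a k)) - (\<Sum>k\<in>F. cmod (a k))"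
proof -
  have U: "(UNIV :: (int^'n) set) = F \<union> (- F)" by auto
  have d: "F \<inter> - F = {}" by auto
  have e1: "(\<Sum>\<^sub>\<infinity>k. a k * fexp k x) = (\<Sum>k\<in>F. a k * fexp k x) + (\<Sum>\<^sub>\<infinity>k\<in>-F. a k * fexp k x)"
    by (subst U, subst infsum_Un_disjoint[OF series_summable[OF as] series_summable[OF as] d]) (simp add: F)
  have e2: "(\<Sum>\<^sub>\<infinity>k. cmod (a k)) = (\<Sum>k\<in>F. cmod (a k)) + (\<Sum>\<^sub>\<infinity>k\<in>-F. cmod (a k))"
    by (subst U, subst infsum_Un_disjoint[OF summable_on_subset_banach[OF as] summable_on_subset_banach[OF as] d]) (auto simp: F)
  have "cmod (\<Sum>\<^sub>\<infinity>k\<in>-F. a k * fexp k x) \<le> (\<Sum>\<^sub>\<infinity>k\<in>-F. norm (a k * fexp k x))"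
    by (rule norm_infsum_bound[OF series_abs[OF as]])
  also have "\<dots> = (\<Sum>\<^sub>\<infinity>k\<in>-F. cmod (a k))" by (simp add: norm_mult)
  finally show ?thesis using e1 e2 by simp
qed

lemma series_approx:
  fixes a :: "int^'n \<Rightarrow> complex"
  assumes as: "(\<lambda>k. cmod (a k)) summable_on UNIV" and e: "e > 0"
  obtains F0 where "finite F0" "\<And>Y. finite Y \<Longrightarrow> F0 \<subseteq> Y \<Longrightarrow> (\<Sum>\<^sub>\<infinity>k. cmod (a k)) - (\<Sum>k\<in>Y. cmod (a k)) \<le> e"
proof -
  obtain F0 where F0: "finite F0" "dist (\<Sum>k\<in>F0. cmod (a k)) (\<Sum>\<^sub>\<infinity>k. cmod (a k)) \<le> e"
    using infsum_finite_approximation[OF as e] by blast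
  have "(\<Sum>\<^sub>\<infinity>k. cmod (a k)) - (\<Sum>k\<in>Y. cmod (a k)) \<le> e" if Y: "finite Y" "F0 \<subseteq> Y" for Y
  proof -
    have "(\<Sum>k\<in>F0. cmod (a k)) \<le> (\<Sum>k\<in>Y. cmod (a k))" using Y by (intro sum_mono2) auto
    then show ?thesis using F0(2) by (simp add: dist_real_def)
  qed
  then show ?thesis using that F0(1) by blast
qed

lemma series_cont:
  fixes a :: "int^'n \<Rightarrow> complex"
  assumes as: "(\<lambda>k. cmod (a k)) summable_on UNIV"
  shows "continuous_on UNIV (\<lambda>x::real^'n. \<Sum>\<^sub>\<infinity>k. a k * fexp k x)"
proof (rule uniform_limit_theorem[where F = "finite_subsets_at_top UNIV" and f = "\<lambda>F x. \<Sum>k\<in>F. a k * fexp k x"])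
  show "\<forall>\<^sub>F F in finite_subsets_at_top UNIV. continuous_on UNIV (\<lambda>x::real^'n. \<Sum>k\<in>F. a k * fexp k x)"
    by (intro always_eventually allI continuous_intros continuous_fexp)
  show "uniform_limit UNIV (\<lambda>F x::real^'n. \<Sum>k\<in>F. a k * fexp k x) (\<lambda>x. \<Sum>\<^sub>\<infinity>k. a k * fexp k x) (finite_subsets_at_top UNIV)"
  proof (rule uniform_limitI)
    fix e :: real assume e: "e > 0"
    then have e2: "e/2 > 0" by simp
    obtain F0 where F0: "finite F0" "\<And>Y. finite Y \<Longrightarrow> F0 \<subseteq> Y \<Longrightarrow> (\<Sum>\<^sub>\<infinity>k. cmod (a k)) - (\<Sum>k\<in>Y. cmod (a k)) \<le> e/2"
      using series_approx[OF as e2] by blast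
    show "\<forall>\<^sub>F F in finite_subsets_at_top UNIV. \<forall>x\<in>UNIV. dist (\<Sum>k\<in>F. a k * fexp k x) (\<Sum>\<^sub>\<infinity>k. a k * fexp k x) < e"
      unfolding eventually_finite_subsets_at_top
    proof (intro exI conjI allI impI ballI)
      fix Y x assume Y: "finite Y \<and> F0 \<subseteq> Y \<and> Y \<subseteq> UNIV"
      have "dist (\<Sum>k\<in>Y. a k * fexp k x) (\<Sum>\<^sub>\<infinity>k. a k * fexp k x) = cmod ((\<Sum>\<^sub>\<infinity>k. a k * fexp k x) - (\<Sum>k\<in>Y. a k * fexp k x))"
        by (simp add: dist_norm norm_minus_commute)
      also have "\<dots> \<le> e/2" using series_tail[OF as, of Y x] F0(2)[of Y] Y by simp
      finally show "dist (\<Sum>k\<in>Y. a k * fexp k x) (\<Sum>\<^sub>\<infinity>k. a k * fexp k x) < e" using e by simp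
    qed (use F0 in auto)
  qed
qed simp

lemma series_rep:
  fixes a :: "int^'n \<Rightarrow> complex"
  assumes as: "(\<lambda>k. cmod (a k)) summable_on UNIV"
  shows "represents (\<lambda>x::real^'n. \<Sum>\<^sub>\<infinity>k. a k * fexp k x) a"
proof -
  define h where "h = (\<lambda>x::real^'n. \<Sum>\<^sub>\<infinity>k. a k * fexp k x)"
  have hc: "continuous_on UNIV h" unfolding h_def by (rule series_cont[OF as])
  have hp: "periodic_cont h" unfolding periodic_cont_def using hc by (simp add: h_def fexp_periodic)
  define V :: real where "V = (2*pi) ^ CARD('n)"
  have V0: "V > 0" by (simp add: V_def)
  have fc: "fourier_coeff h m = a m" for m
  proof -
    define I where "I = integral torus_cell (\<lambda>x. h x * cnj (fexp m x))"
    have "cmod (I - a m * V) \<le> 0 + e" if e: "e > 0" for e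
    proof -
      have eV: "e / V > 0" using e V0 by simp
      obtain F0 where F0: "finite F0" "\<And>Y. finite Y \<Longrightarrow> F0 \<subseteq> Y \<Longrightarrow> (\<Sum>\<^sub>\<infinity>k. cmod (a k)) - (\<Sum>k\<in>Y. cmod (a k)) \<le> e / V"
        using series_approx[OF as eV] by blast
      define F where "F = insert m F0"
      have F: "finite F" "m \<in> F" using F0 by (auto simp: F_def)
      define P where "P x = (\<Sum>k\<in>F. a k * fexp k x)" for x :: "real^'n"
      have Pc: "continuous_on UNIV P" unfolding P_def by (intro continuous_intros continuous_fexp)
      have "I - a m * V = integral torus_cell (\<lambda>x. h x * cnj (fexp m x)) - integral torus_cell (\<lambda>x. P x * cnj (fexp m x))"
        unfolding I_def P_def integral_finite_trig[OF F(1)] using F(2) by (simp add: V_def)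
      also have "\<dots> = integral torus_cell (\<lambda>x. (h x - P x) * cnj (fexp m x))"
        using hc Pc by (subst integral_diff[symmetric]) (auto intro!: cont_integrable continuous_intros continuous_fexp simp: algebra_simps)
      finally have Ieq: "I - a m * V = integral torus_cell (\<lambda>x. (h x - P x) * cnj (fexp m x))" .
      have int: "((\<lambda>x. (h x - P x) * cnj (fexp m x)) has_integral (I - a m * V)) (cbox 0 (\<chi> i. 2*pi))"
        unfolding Ieq torus_cell_def[symmetric]
        using hc Pc by (intro integrable_integral cont_integrable continuous_intros continuous_fexp) auto
      have "cmod (I - a m * V) \<le> (e / V) * Henstock_Kurzweil_Integration.content (cbox 0 (\<chi> i. 2*pi) :: (real^'n) set)"
      proof (rule has_integral_bound[OF _ int])
        show "0 \<le> e / V" using eV by simp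
        fix x :: "real^'n"
        have "cmod ((h x - P x) * cnj (fexp m x)) = cmod (h x - P x)" by (simp add: norm_mult)
        also have "\<dots> \<le> e / V"
        proof -
          have "F0 \<subseteq> F" by (auto simp: F_def)
          then have "(\<Sum>\<^sub>\<infinity>k. cmod (a k)) - (\<Sum>k\<in>F. cmod (a k)) \<le> e / V" using F0(2) F(1) by blast
          then show ?thesis using series_tail[OF as F(1), of x] unfolding h_def P_def by linarith
        qed
        finally show "cmod ((h x - P x) * cnj (fexp m x)) \<le> e / V" .
      qed
      also have "\<dots> = e"
      proof -
        have "Henstock_Kurzweil_Integration.content (cbox 0 (\<chi> i. 2*pi) :: (real^'n) set) = V"
          using content_cell[where 'n='n] by (simp add: torus_cell_def V_def)
        then show ?thesis using V0 by simp
      qed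
      finally show ?thesis by simp
    qed
    then have "cmod (I - a m * V) \<le> 0" by (rule field_le_epsilon)
    then have "I = a m * V" by simp
    then show ?thesis unfolding fourier_coeff_def I_def[symmetric] using V0 by (simp add: V_def)
  qed
  show ?thesis unfolding represents_def h_def[symmetric] using hp fc by simp
qed

lemma series_bound:
  fixes a :: "int^'n \<Rightarrow> complex"
  assumes as: "(\<lambda>k. cmod (a k)) summable_on UNIV"
  shows "cmod (\<Sum>\<^sub>\<infinity>k. a k * fexp k x) \<le> (\<Sum>\<^sub>\<infinity>k. cmod (a k))"
proof -
  have "cmod (\<Sum>\<^sub>\<infinity>k. a k * fexp k x) \<le> (\<Sum>\<^sub>\<infinity>k. norm (a k * fexp k x))"
    by (rule norm_infsum_bound[OF series_abs[OF as]])
  then show ?thesis by (simp add: norm_mult)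
qed




lemma amgm_t:
  fixes X Y t :: real
  assumes "t > 0"
  shows "X * Y \<le> (t * X^2 + Y^2 / t) / 2"
proof -
  have "0 \<le> (t * X - Y)^2" by simp
  then have "2 * t * (X * Y) \<le> t^2 * X^2 + Y^2" by (simp add: power2_eq_square algebra_simps)
  then have "X * Y \<le> (t^2 * X^2 + Y^2) / (2 * t)" using assms by (simp add: field_simps)
  also have "\<dots> = (t * X^2 + Y^2 / t) / 2" using assms by (simp add: field_simps power2_eq_square)
  finally show ?thesis .
qed

lemma cs_pointwise:
  fixes p g :: complex and w t :: real
  assumes w: "w > 0" and t: "t > 0"
  shows "cmod (cnj p * g) \<le> (t * (w powr \<tau> * (cmod p)^2) + (w powr (-\<tau>) * (cmod g)^2) / t) / 2"
proof -
  define X where "X = sqrt (w powr \<tau>) * cmod p"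
  define Y where "Y = sqrt (w powr (-\<tau>)) * cmod g"
  have "sqrt (w powr \<tau>) * sqrt (w powr (-\<tau>)) = 1"
    using w by (simp add: real_sqrt_mult[symmetric] powr_add[symmetric])
  then have XY: "X * Y = cmod (cnj p * g)"
    unfolding X_def Y_def by (simp add: norm_mult algebra_simps)
  have X2: "X^2 = w powr \<tau> * (cmod p)^2" unfolding X_def by (simp add: power_mult_distrib)
  have Y2: "Y^2 = w powr (-\<tau>) * (cmod g)^2" unfolding Y_def by (simp add: power_mult_distrib)
  show ?thesis using amgm_t[OF t, of X Y] XY X2 Y2 by simp
qed

lemma cs_bound:
  fixes p g :: "int^'n \<Rightarrow> complex" and w :: "int^'n \<Rightarrow> real"
  assumes wpos: "\<And>k. w k > 0"
    and ss: "(\<lambda>k. w k powr \<tau> * (cmod (p k))^2) summable_on UNIV"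
    and gs: "(\<lambda>k. w k powr (-\<tau>) * (cmod (g k))^2) summable_on UNIV"
  shows "(\<lambda>k. cmod (cnj (p k) * g k)) summable_on UNIV"
    and "(\<Sum>\<^sub>\<infinity>k. cmod (cnj (p k) * g k)) \<le>
          sqrt (\<Sum>\<^sub>\<infinity>k. w k powr (-\<tau>) * (cmod (g k))^2) * ((\<Sum>\<^sub>\<infinity>k. w k powr \<tau> * (cmod (p k))^2) + 1) / 2"
proof -
  define s where "s k = w k powr \<tau> * (cmod (p k))^2" for k
  define u where "u k = w k powr (-\<tau>) * (cmod (g k))^2" for k
  define A where "A k = cmod (cnj (p k) * g k)" for k
  have ss': "s summable_on UNIV" using ss by (simp add: s_def[abs_def])
  have us': "u summable_on UNIV" using gs by (simp add: u_def[abs_def])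
  have s0: "s k \<ge> 0" for k by (simp add: s_def)
  have u0: "u k \<ge> 0" for k by (simp add: u_def)
  have pt: "A k \<le> (t/2) * s k + (1/(2*t)) * u k" if "t > 0" for t k
    using cs_pointwise[OF wpos that, where p="p k" and g="g k" and \<tau>=\<tau>] that unfolding A_def s_def u_def
    by (simp add: field_simps)
  have sumt: "(\<lambda>k. (t/2) * s k + (1/(2*t)) * u k) summable_on UNIV" for t
    by (intro summable_on_add summable_on_cmult_right ss' us')
  have As: "A summable_on UNIV"
    by (rule summable_on_comparison_test[OF sumt[of 1]]) (use pt[of 1] in \<open>auto simp: A_def\<close>)
  then show "(\<lambda>k. cmod (cnj (p k) * g k)) summable_on UNIV" by (simp add: A_def[abs_def])
  define S where "S = infsum s UNIV"
  define G where "G = infsum u UNIV"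
  have S0: "S \<ge> 0" unfolding S_def by (intro infsum_nonneg s0)
  have G0: "G \<ge> 0" unfolding G_def by (intro infsum_nonneg u0)
  have bt: "infsum A UNIV \<le> (t/2) * S + (1/(2*t)) * G" if t: "t > 0" for t
  proof -
    have "infsum A UNIV \<le> infsum (\<lambda>k. (t/2) * s k + (1/(2*t)) * u k) UNIV"
      by (rule infsum_mono[OF As sumt]) (use pt[OF t] in auto)
    also have "\<dots> = infsum (\<lambda>k. (t/2) * s k) UNIV + infsum (\<lambda>k. (1/(2*t)) * u k) UNIV"
      using summable_on_cmult_right[OF ss', of "t/2"] summable_on_cmult_right[OF us', of "1/(2*t)"]
      by (rule infsum_add)
    also have "\<dots> = (t/2) * S + (1/(2*t)) * G"
      unfolding S_def G_def by (simp only: infsum_cmult_right')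
    finally show ?thesis .
  qed
  have "infsum A UNIV \<le> sqrt G * (S + 1) / 2"
  proof (cases "G > 0")
    case True
    have "infsum A UNIV \<le> (sqrt G/2) * S + (1/(2 * sqrt G)) * G" using bt[of "sqrt G"] True by simp
    also have "\<dots> = sqrt G * (S + 1) / 2"
    proof -
      have sg: "sqrt G * sqrt G = G" using True by simp
      have sp: "sqrt G > 0" using True by simp
      have "(1/(2 * sqrt G)) * G = (1/(2 * sqrt G)) * (sqrt G * sqrt G)" by (simp only: sg)
      also have "\<dots> = sqrt G / 2" using sp by (simp add: field_simps)
      finally show ?thesis by (simp add: algebra_simps)
    qed
    finally show ?thesis .
  next
    case False
    then have G00: "G = 0" using G0 by simp
    have "infsum A UNIV \<le> 0 + e" if e: "e > 0" for e
    proof -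
      define t where "t = 2 * e / (S + 1)"
      have t0: "t > 0" using e S0 by (simp add: t_def)
      have "infsum A UNIV \<le> (t/2) * S" using bt[OF t0] G00 by simp
      also have "\<dots> = e * (S / (S + 1))" using S0 by (simp add: t_def field_simps)
      also have "\<dots> \<le> e * 1" using S0 e by (intro mult_left_mono) auto
      finally show ?thesis by simp
    qed
    then have "infsum A UNIV \<le> 0" by (rule field_le_epsilon)
    then show ?thesis using G00 by simp
  qed
  then show "(\<Sum>\<^sub>\<infinity>k. cmod (cnj (p k) * g k)) \<le>
          sqrt (\<Sum>\<^sub>\<infinity>k. w k powr (-\<tau>) * (cmod (g k))^2) * ((\<Sum>\<^sub>\<infinity>k. w k powr \<tau> * (cmod (p k))^2) + 1) / 2"
    unfolding A_def S_def G_def s_def u_def .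
qed

lemma L2_bound:
  fixes f :: "real^'n \<Rightarrow> complex"
  assumes fc: "continuous_on UNIV f" and M: "M \<ge> 0" and b: "\<And>x. cmod (f x) \<le> M"
  shows "L2_norm_torus f \<le> M"
proof -
  define V :: real where "V = (2*pi) ^ CARD('n)"
  have V0: "V > 0" by (simp add: V_def)
  have "integral torus_cell (\<lambda>x. (cmod (f x))^2) \<le> integral torus_cell (\<lambda>x::real^'n. M^2)"
  proof (rule integral_le)
    show "(\<lambda>x. (cmod (f x))^2) integrable_on torus_cell"
      unfolding torus_cell_def using fc by (intro integrable_continuous continuous_intros) (auto intro: continuous_on_subset)
    show "(\<lambda>x::real^'n. M^2) integrable_on torus_cell" unfolding torus_cell_def
      by (intro integrable_continuous continuous_intros)
    fix x show "(cmod (f x))^2 \<le> M^2" using b[of x] by (simp add: power_mono)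
  qed
  also have "\<dots> = V * M^2"
    using content_cell[where 'n='n] by (simp add: torus_cell_def V_def)
  finally have "(1 / V) * integral torus_cell (\<lambda>x. (cmod (f x))^2) \<le> M^2"
    using V0 by (simp add: field_simps)
  then have "sqrt ((1 / V) * integral torus_cell (\<lambda>x. (cmod (f x))^2)) \<le> sqrt (M^2)"
    by (rule real_sqrt_le_mono)
  then have "L2_norm_torus f \<le> sqrt (M^2)" unfolding L2_norm_torus_def V_def by simp
  then show ?thesis using M by simp
qed




lemma w_pos: "1 + (knorm k)^2 > (0::real)"
  by (simp add: add_pos_nonneg)

lemma L2_nonneg:
  fixes f :: "real^'n \<Rightarrow> complex"
  assumes fc: "continuous_on UNIV f"
  shows "L2_norm_torus f \<ge> 0"
proof -
  have "integral torus_cell (\<lambda>x. (cmod (f x))^2) \<ge> 0"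
  proof (rule integral_nonneg)
    show "(\<lambda>x. (cmod (f x))^2) integrable_on torus_cell"
      unfolding torus_cell_def using fc by (intro integrable_continuous continuous_intros) (auto intro: continuous_on_subset)
  qed simp
  then show ?thesis unfolding L2_norm_torus_def by simp
qed

lemma dir1:
  fixes Lh :: "int^'n \<Rightarrow> complex"
  assumes emb: "sobolev_embeds_CL \<tau> Lh"
  shows "(\<lambda>k. (1 + (knorm k)^2) powr \<tau> * (cmod (pinv Lh k))^2) summable_on UNIV"
proof -
  define w where "w k = 1 + (knorm k)^2" for k :: "int^'n"
  have wpos: "w k > 0" for k unfolding w_def by (rule w_pos)
  define s where "s k = w k powr \<tau> * (cmod (pinv Lh k))^2" for k
  have s0: "s k \<ge> 0" for k by (simp add: s_def)
  obtain C where C: "\<And>g. sobolev (-\<tau>) g \<Longrightarrow> CL_norm Lh g \<le> C * sobolev_norm (-\<tau>) g"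
    using emb unfolding sobolev_embeds_CL_def by blast
  have bnd: "sum s F \<le> C^2" if F: "finite F" for F
  proof -
    define g where "g k = (if k \<in> F then complex_of_real (w k powr \<tau>) * pinv Lh k else 0)" for k
    define SF where "SF = sum s F"
    have SF0: "SF \<ge> 0" unfolding SF_def by (intro sum_nonneg s0)
    have ug: "w k powr (-\<tau>) * (cmod (g k))^2 = (if k \<in> F then s k else 0)" for k
    proof (cases "k \<in> F")
      case True
      have e: "w k powr (-\<tau>) * (w k powr \<tau> * w k powr \<tau>) = w k powr \<tau>"
        using wpos[of k] by (simp add: powr_add[symmetric] mult.assoc[symmetric])
      have "cmod (g k) = w k powr \<tau> * cmod (pinv Lh k)" using True by (simp add: g_def norm_mult)
      then have "w k powr (-\<tau>) * (cmod (g k))^2 = (w k powr (-\<tau>) * (w k powr \<tau> * w k powr \<tau>)) * (cmod (pinv Lh k))^2"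
        by (simp add: power2_eq_square algebra_simps)
      then show ?thesis using True e by (simp add: s_def)
    qed (simp add: g_def)
    have hs: "((\<lambda>k. w k powr (-\<tau>) * (cmod (g k))^2) has_sum SF) UNIV"
      by (rule has_sum_finite_neutralI[of F]) (auto simp: ug SF_def F)
    have sg: "slowly_growing g"
      unfolding slowly_growing_def
    proof (intro exI allI)
      fix k
      have "cmod (g k) \<le> (\<Sum>j\<in>F. cmod (g j))"
      proof (cases "k \<in> F")
        case True then show ?thesis using F by (intro member_le_sum) auto
      next
        case False then show ?thesis by (simp add: g_def sum_nonneg)
      qed
      then show "cmod (g k) \<le> (\<Sum>j\<in>F. cmod (g j)) * (1 + knorm k) ^ 0" by simp
    qed
    have sob: "sobolev (-\<tau>) g"
      unfolding sobolev_def using sg hs by (auto simp: w_def summable_on_def)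
    have sn: "sobolev_norm (-\<tau>) g = sqrt SF"
      unfolding sobolev_norm_def using infsumI[OF hs] by (simp add: w_def)
    have aeq: "lsi (adj (pinv Lh)) g = (\<lambda>k. if k \<in> F then complex_of_real (s k) else 0)"
    proof
      fix k
      show "lsi (adj (pinv Lh)) g k = (if k \<in> F then complex_of_real (s k) else 0)"
      proof (cases "k \<in> F")
        case True
        have "cnj (pinv Lh k) * (complex_of_real (w k powr \<tau>) * pinv Lh k) =
              complex_of_real (w k powr \<tau>) * (pinv Lh k * cnj (pinv Lh k))" by (simp add: algebra_simps)
        also have "\<dots> = complex_of_real (s k)"
          by (simp add: complex_norm_square[symmetric] s_def del: of_real_power)
        finally show ?thesis using True by (simp add: lsi_def adj_def g_def)
      qed (simp add: lsi_def adj_def g_def)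
    qed
    define P where "P x = (\<Sum>k\<in>F. complex_of_real (s k) * fexp k x)" for x :: "real^'n"
    have rep: "represents P (lsi (adj (pinv Lh)) g)"
      unfolding aeq P_def[abs_def] by (rule represents_finite[OF F])
    have some: "(SOME h. represents h (lsi (adj (pinv Lh)) g)) = P" by (rule some_represents[OF rep])
    have Pb: "cmod (P x) \<le> (\<Sum>k\<in>F. s k)" for x
    proof -
      have "cmod (P x) \<le> (\<Sum>k\<in>F. cmod (complex_of_real (s k) * fexp k x))" unfolding P_def by (rule norm_sum)
      also have "\<dots> = (\<Sum>k\<in>F. s k)" using s0 by (simp add: norm_mult)
      finally show ?thesis .
    qed
    have bdd: "bdd_above (range (\<lambda>x. cmod (P x)))" using Pb by (intro bdd_aboveI2) auto
    have P0: "P 0 = complex_of_real SF" by (simp add: P_def SF_def)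
    define sup where "sup = (SUP x\<in>UNIV. cmod (P x))"
    have "cmod (P 0) \<le> sup" unfolding sup_def by (rule cSUP_upper[OF UNIV_I bdd])
    then have SFsup: "SF \<le> sup" using P0 SF0 by simp
    have "sup \<le> CL_norm Lh g"
    proof -
      have "sup \<le> sqrt (sup^2)" by simp
      also have "\<dots> \<le> sqrt (sup^2 + (L2_norm_torus (proj_null_fun Lh g))^2)" by (intro real_sqrt_le_mono) simp
      finally show ?thesis unfolding CL_norm_def some sup_def .
    qed
    then have "SF \<le> C * sqrt SF" using C[OF sob] sn SFsup by simp
    then show "sum s F \<le> C^2"
    proof (cases "SF = 0")
      case True then show ?thesis by (simp add: SF_def)
    next
      case False
      then have sp: "sqrt SF > 0" using SF0 by simp
      have "sqrt SF * sqrt SF \<le> C * sqrt SF" using \<open>SF \<le> C * sqrt SF\<close> SF0 by simp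
      then have "sqrt SF \<le> C" by (rule mult_right_le_imp_le[OF _ sp])
      then have "(sqrt SF)^2 \<le> C^2" using sp by (intro power_mono) auto
      then show ?thesis using SF0 by (simp add: SF_def)
    qed
  qed
  have "s summable_on UNIV"
    by (rule nonneg_bdd_above_summable_on) (use s0 bnd in \<open>auto intro!: bdd_aboveI2\<close>)
  then show ?thesis by (simp add: s_def[abs_def] w_def)
qed


lemma dir2:
  fixes Lh :: "int^'n \<Rightarrow> complex"
  assumes Zf: "finite {k. Lh k = 0}"
    and ss: "(\<lambda>k. (1 + (knorm k)^2) powr \<tau> * (cmod (pinv Lh k))^2) summable_on UNIV"
  shows "sobolev_embeds_CL \<tau> Lh"
proof -
  define w where "w k = 1 + (knorm k)^2" for k :: "int^'n"
  have wpos: "\<And>k. w k > 0" unfolding w_def by (rule w_pos)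
  have ss': "(\<lambda>k. w k powr \<tau> * (cmod (pinv Lh k))^2) summable_on UNIV" using ss by (simp add: w_def)
  define Ssum where "Ssum = (\<Sum>\<^sub>\<infinity>k. w k powr \<tau> * (cmod (pinv Lh k))^2)"
  define Z where "Z = {k. Lh k = 0}"
  define K2 where "K2 = (\<Sum>k\<in>Z. sqrt (w k powr \<tau>))"
  have K20: "K2 \<ge> 0" unfolding K2_def by (intro sum_nonneg) simp
  define C where "C = (Ssum + 1) / 2 + K2"
  have key: "in_CL Lh g \<and> CL_norm Lh g \<le> C * sobolev_norm (-\<tau>) g" if sob: "sobolev (-\<tau>) g" for g
  proof -
    have sg: "slowly_growing g" using sob by (simp add: sobolev_def)
    have gs: "(\<lambda>k. w k powr (-\<tau>) * (cmod (g k))^2) summable_on UNIV" using sob by (simp add: sobolev_def w_def)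
    define G where "G = (\<Sum>\<^sub>\<infinity>k. w k powr (-\<tau>) * (cmod (g k))^2)"
    have G0: "G \<ge> 0" unfolding G_def by (intro infsum_nonneg) simp
    have sn: "sobolev_norm (-\<tau>) g = sqrt G" by (simp add: sobolev_norm_def G_def w_def)
    define a where "a = lsi (adj (pinv Lh)) g"
    have a_eq: "a k = cnj (pinv Lh k) * g k" for k by (simp add: a_def lsi_def adj_def)
    have as: "(\<lambda>k. cmod (a k)) summable_on UNIV"
      using cs_bound(1)[OF wpos ss' gs] by (simp add: a_eq)
    have ab: "(\<Sum>\<^sub>\<infinity>k. cmod (a k)) \<le> sqrt G * (Ssum + 1) / 2"
      using cs_bound(2)[OF wpos ss' gs] by (simp add: a_eq G_def Ssum_def)
    define h where "h = (\<lambda>x::real^'n. \<Sum>\<^sub>\<infinity>k. a k * fexp k x)"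
    have rep: "represents h a" unfolding h_def by (rule series_rep[OF as])
    have inCL: "in_CL Lh g" unfolding in_CL_def is_continuous_dist_def a_def[symmetric] using sg rep by blast
    have some: "(SOME h. represents h (lsi (adj (pinv Lh)) g)) = h" unfolding a_def[symmetric] by (rule some_represents[OF rep])
    have hb: "cmod (h x) \<le> (\<Sum>\<^sub>\<infinity>k. cmod (a k))" for x unfolding h_def by (rule series_bound[OF as])
    have bdd: "bdd_above (range (\<lambda>x. cmod (h x)))" using hb by (intro bdd_aboveI2) auto
    define sup where "sup = (SUP x\<in>UNIV. cmod (h x))"
    have sup_le: "sup \<le> (\<Sum>\<^sub>\<infinity>k. cmod (a k))" unfolding sup_def by (rule cSUP_least) (auto simp: hb)
    have "cmod (h 0) \<le> sup" unfolding sup_def by (rule cSUP_upper[OF UNIV_I bdd])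
    then have sup0: "sup \<ge> 0" by (meson norm_ge_zero order_trans)
    define f where "f = proj_null_fun Lh g"
    have f_eq: "f x = (\<Sum>k\<in>Z. g k * fexp k x)" for x by (simp add: f_def proj_null_fun_def Z_def)
    have fc: "continuous_on UNIV f" unfolding f_eq[abs_def] by (intro continuous_intros continuous_fexp)
    have gk: "cmod (g k) \<le> sqrt (w k powr \<tau>) * sqrt G" for k
    proof -
      have "sum (\<lambda>k. w k powr (-\<tau>) * (cmod (g k))^2) {k} \<le> G"
        unfolding G_def by (rule finite_sum_le_infsum[OF gs]) auto
      then have u: "w k powr (-\<tau>) * (cmod (g k))^2 \<le> G" by simp
      have "(cmod (g k))^2 = w k powr \<tau> * (w k powr (-\<tau>) * (cmod (g k))^2)"
        using wpos[of k] by (simp add: mult.assoc[symmetric] powr_add[symmetric])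
      also have "\<dots> \<le> w k powr \<tau> * G" using u by (intro mult_left_mono) auto
      finally have "cmod (g k) \<le> sqrt (w k powr \<tau> * G)" by (rule real_le_rsqrt)
      then show ?thesis by (simp add: real_sqrt_mult)
    qed
    have fb: "cmod (f x) \<le> K2 * sqrt G" for x
    proof -
      have "cmod (f x) \<le> (\<Sum>k\<in>Z. cmod (g k * fexp k x))" unfolding f_eq by (rule norm_sum)
      also have "\<dots> = (\<Sum>k\<in>Z. cmod (g k))" by (simp add: norm_mult)
      also have "\<dots> \<le> (\<Sum>k\<in>Z. sqrt (w k powr \<tau>) * sqrt G)" by (intro sum_mono gk)
      also have "\<dots> = K2 * sqrt G" by (simp add: K2_def sum_distrib_right)
      finally show ?thesis .
    qed
    have L: "L2_norm_torus f \<le> K2 * sqrt G" by (rule L2_bound[OF fc _ fb]) (use K20 G0 in simp)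
    have L0: "L2_norm_torus f \<ge> 0" by (rule L2_nonneg[OF fc])
    have "CL_norm Lh g = sqrt (sup^2 + (L2_norm_torus f)^2)" unfolding CL_norm_def some sup_def f_def ..
    also have "\<dots> \<le> sup + L2_norm_torus f" by (rule sqrt_sum_squares_le_sum[OF sup0 L0])
    also have "\<dots> \<le> sqrt G * (Ssum + 1) / 2 + K2 * sqrt G" using sup_le ab L by linarith
    also have "\<dots> = C * sobolev_norm (-\<tau>) g" by (simp add: C_def sn algebra_simps)
    finally show ?thesis using inCL by simp
  qed
  show ?thesis unfolding sobolev_embeds_CL_def using key by blast
qed

theorem mainTheorem12:
  fixes Lh :: "int^'n \<Rightarrow> complex" and \<tau> :: real
  assumes "spline_admissible Lh"
  shows "(sobolev_embeds_CL \<tau> Lh \<longleftrightarrow> sobolev \<tau> (lsi (pinv Lh) dirac_comb))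
       \<and> (sobolev \<tau> (lsi (pinv Lh) dirac_comb) \<longleftrightarrow>
            (\<lambda>k. (1 + (knorm k)^2) powr \<tau> * (cmod (pinv Lh k))^2) summable_on UNIV)"
proof -
  have sgp: "slowly_growing (pinv Lh)" and Zf: "finite {k. Lh k = 0}"
    using assms by (auto simp: spline_admissible_def)
  have l: "lsi (pinv Lh) dirac_comb = pinv Lh" by (simp add: lsi_def dirac_comb_def)
  have c2: "sobolev \<tau> (lsi (pinv Lh) dirac_comb) \<longleftrightarrow>
            (\<lambda>k. (1 + (knorm k)^2) powr \<tau> * (cmod (pinv Lh k))^2) summable_on UNIV"
    unfolding l sobolev_def using sgp by simp
  show ?thesis using c2 dir1[of \<tau> Lh] dir2[OF Zf, of \<tau>] by blast
qed


end
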